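(* Let $M$ be the metric space \[M:=\Big\{\Big(a,\tfrac{1}{2^{n}}\Big)\colon a\in[0,1],\ n\in\mathbb{N}\Big\}\cup \Big\{(a,b)\colon a\in\{0,1\},\ b\in\Big[0,\tfrac{1}{2}\Big]\Big\}\subseteq\mathbb{R}^2\] with the metric \[d\big((a,b),(c,e)\big):=\begin{cases} |a-c|, & \text{if }b=e,\\ \min\{a+c,\,2-a-c\}+|b-e|, &\text{if } b\neq e, \end{cases}\] and base point $(0,0)$. Then the Lipschitz-free space $\mathcal{F}(M)$ is not weakly almost square.
   Context: For a pointed metric space $(M,d,0)$, $\mathrm{Lip}_0(M)$ is the Banach space of Lipschitz functions $f\colon M\to\mathbb{R}$ with $f(0)=0$, normed by the best Lipschitz constant. Let $\delta\colon M\to\mathrm{Lip}_0(M)^*$, $\delta_x(f)=f(x)$. The Lipschitz-free space $\mathcal{F}(M)$ is the norm-closed linear span of $\{\delta_x\colon x\in M\}$ in $\mathrm{Lip}_0(M)^*$; its dual is $\mathrm{Lip}_0(M)$. A Banach space $X$ is weakly almost square (WASQ) if for every $x\in S_X$ there is a sequence $(y_i)\subseteq B_X$ with $\|x\pm y_i\|\to 1$, $\|y_i\|\to1$, and $y_i\to0$ weakly. Here $\mathbb{N}=\{1,2,\dots\}$. *)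

theory Defs
  imports "HOL-Analysis.Analysis"
begin

text \<open>Pointed metric space given by a carrier set M, a distance d and a base point z.
  Lipschitz functions are represented extensionally (value 0 outside M).\<close>

definition lip0 :: "'a set \<Rightarrow> ('a \<Rightarrow> 'a \<Rightarrow> real) \<Rightarrow> 'a \<Rightarrow> ('a \<Rightarrow> real) set" where
  "lip0 M d z = {f. f z = 0 \<and> (\<forall>x. x \<notin> M \<longrightarrow> f x = 0) \<and>
      (\<exists>L. \<forall>p\<in>M. \<forall>q\<in>M. \<bar>f p - f q\<bar> \<le> L * d p q)}"

definition lipnorm :: "'a set \<Rightarrow> ('a \<Rightarrow> 'a \<Rightarrow> real) \<Rightarrow> ('a \<Rightarrow> real) \<Rightarrow> real" where
  "lipnorm M d f = Sup {\<bar>f p - f q\<bar> / d p q | p q. p \<in> M \<and> q \<in> M \<and> p \<noteq> q}"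

definition dnorm :: "'a set \<Rightarrow> ('a \<Rightarrow> 'a \<Rightarrow> real) \<Rightarrow> 'a \<Rightarrow> (('a \<Rightarrow> real) \<Rightarrow> real) \<Rightarrow> real" where
  "dnorm M d z \<mu> = Sup {\<bar>\<mu> f\<bar> | f. f \<in> lip0 M d z \<and> lipnorm M d f \<le> 1}"

text \<open>Lipschitz-free space: norm-closure in Lip_0(M)^* of the span of the evaluation
  functionals delta_x. Elements are functionals, extensionally 0 outside Lip_0(M).\<close>
definition free_space :: "'a set \<Rightarrow> ('a \<Rightarrow> 'a \<Rightarrow> real) \<Rightarrow> 'a \<Rightarrow> (('a \<Rightarrow> real) \<Rightarrow> real) set" where
  "free_space M d z = {\<mu>. (\<forall>f. f \<notin> lip0 M d z \<longrightarrow> \<mu> f = 0) \<and>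
     (\<forall>e>0. \<exists>S c. finite S \<and> S \<subseteq> M \<and>
        (\<forall>f\<in>lip0 M d z. \<bar>\<mu> f - (\<Sum>x\<in>S. c x * f x)\<bar> \<le> e * lipnorm M d f))}"

definition weakly_null :: "'a set \<Rightarrow> ('a \<Rightarrow> 'a \<Rightarrow> real) \<Rightarrow> 'a \<Rightarrow> (nat \<Rightarrow> (('a \<Rightarrow> real) \<Rightarrow> real)) \<Rightarrow> bool" where
  "weakly_null M d z y \<longleftrightarrow>
     (\<forall>\<phi> :: (('a \<Rightarrow> real) \<Rightarrow> real) \<Rightarrow> real.
        (\<forall>\<mu>\<in>free_space M d z. \<forall>\<nu>\<in>free_space M d z. \<forall>a b.
            \<phi> (\<lambda>f. a * \<mu> f + b * \<nu> f) = a * \<phi> \<mu> + b * \<phi> \<nu>) \<and>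
        (\<exists>C. \<forall>\<mu>\<in>free_space M d z. \<bar>\<phi> \<mu>\<bar> \<le> C * dnorm M d z \<mu>)
        \<longrightarrow> (\<lambda>i. \<phi> (y i)) \<longlonglongrightarrow> 0)"

definition free_WASQ :: "'a set \<Rightarrow> ('a \<Rightarrow> 'a \<Rightarrow> real) \<Rightarrow> 'a \<Rightarrow> bool" where
  "free_WASQ M d z \<longleftrightarrow>
     (\<forall>x\<in>free_space M d z. dnorm M d z x = 1 \<longrightarrow>
        (\<exists>y :: nat \<Rightarrow> (('a \<Rightarrow> real) \<Rightarrow> real).
           (\<forall>i. y i \<in> free_space M d z \<and> dnorm M d z (y i) \<le> 1) \<and>
           (\<lambda>i. dnorm M d z (\<lambda>f. x f + y i f)) \<longlonglongrightarrow> 1 \<and>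
           (\<lambda>i. dnorm M d z (\<lambda>f. x f - y i f)) \<longlonglongrightarrow> 1 \<and>
           (\<lambda>i. dnorm M d z (y i)) \<longlonglongrightarrow> 1 \<and>
           weakly_null M d z y))"

text \<open>The concrete metric space of the theorem (N = {1,2,...}).\<close>
definition Mex :: "(real \<times> real) set" where
  "Mex = {(a, 1 / 2 ^ n) | a n. a \<in> {0..1} \<and> n \<ge> (1::nat)}
       \<union> {(a, b) | a b. a \<in> {0, 1} \<and> b \<in> {0..1/2}}"

definition dex :: "real \<times> real \<Rightarrow> real \<times> real \<Rightarrow> real" where
  "dex p q = (case p of (a, b) \<Rightarrow> case q of (c, e) \<Rightarrow>
      if b = e then \<bar>a - c\<bar> else min (a + c) (2 - a - c) + \<bar>b - e\<bar>)"

end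

theory Submission
  imports Defs
begin

lemma Mex_iff: "(a,b) \<in> Mex \<longleftrightarrow> (\<exists>n\<ge>1. b = 1/2^n \<and> 0 \<le> a \<and> a \<le> 1) \<or> ((a = 0 \<or> a = 1) \<and> 0 \<le> b \<and> b \<le> 1/2)"
  by (auto simp: Mex_def)

lemma pow_half_le: "(n::nat) \<ge> 1 \<Longrightarrow> 1/2^n \<le> (1/2::real)"
proof -
  assume "n \<ge> 1"
  then have "(2::real)^1 \<le> 2^n" by (intro power_increasing) auto
  then show ?thesis by (simp add: field_simps)
qed

lemma Mex_bounds: assumes "(a,b) \<in> Mex" shows "0 \<le> a" "a \<le> 1" "0 \<le> b" "b \<le> 1/2"
  using assms pow_half_le unfolding Mex_iff by auto

lemma side_in: "(s = 0 \<or> s = 1) \<Longrightarrow> 0 \<le> b \<Longrightarrow> b \<le> 1/2 \<Longrightarrow> (s::real, b::real) \<in> Mex"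
  unfolding Mex_iff by auto

lemma dex_same: "dex (a,b) (c,b) = \<bar>a - c\<bar>" by (simp add: dex_def)
lemma dex_diff: "b \<noteq> e \<Longrightarrow> dex (a,b) (c,e) = min (a+c) (2-a-c) + \<bar>b - e\<bar>" by (simp add: dex_def)

lemma dex_nonneg: "p \<in> Mex \<Longrightarrow> q \<in> Mex \<Longrightarrow> dex p q \<ge> 0"
proof -
  assume p: "p \<in> Mex" and q: "q \<in> Mex"
  obtain a b c e where pe: "p = (a,b)" and qe: "q = (c,e)" by (cases p, cases q)
  show ?thesis using Mex_bounds[OF p[unfolded pe]] Mex_bounds[OF q[unfolded qe]] unfolding pe qe
    by (auto simp: dex_def)
qed

lemma dex_pos: "p \<in> Mex \<Longrightarrow> q \<in> Mex \<Longrightarrow> p \<noteq> q \<Longrightarrow> dex p q > 0"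
proof -
  assume p: "p \<in> Mex" and q: "q \<in> Mex" and ne: "p \<noteq> q"
  obtain a b c e where pe: "p = (a,b)" and qe: "q = (c,e)" by (cases p, cases q)
  show ?thesis using Mex_bounds[OF p[unfolded pe]] Mex_bounds[OF q[unfolded qe]] ne unfolding pe qe
    by (auto simp: dex_def)
qed

lemma dex_side: "(s = 0 \<or> s = 1) \<Longrightarrow> dex (s,b) (s,e) = \<bar>b - e\<bar>"
  by (auto simp: dex_def)

lemma lipM:
  assumes H: "\<And>a b c. (a,b) \<in> Mex \<Longrightarrow> (c,b) \<in> Mex \<Longrightarrow> \<bar>f (a,b) - f (c,b)\<bar> \<le> L * \<bar>a - c\<bar>"
    and V0: "\<And>b e. 0 \<le> b \<Longrightarrow> b \<le> 1/2 \<Longrightarrow> 0 \<le> e \<Longrightarrow> e \<le> 1/2 \<Longrightarrow> \<bar>f (0,b) - f (0,e)\<bar> \<le> L * \<bar>b - e\<bar>"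
    and V1: "\<And>b e. 0 \<le> b \<Longrightarrow> b \<le> 1/2 \<Longrightarrow> 0 \<le> e \<Longrightarrow> e \<le> 1/2 \<Longrightarrow> \<bar>f (1,b) - f (1,e)\<bar> \<le> L * \<bar>b - e\<bar>"
    and L: "L \<ge> 0"
    and p: "p \<in> Mex" and q: "q \<in> Mex"
  shows "\<bar>f p - f q\<bar> \<le> L * dex p q"
proof -
  obtain a b where pe: "p = (a,b)" by (cases p)
  obtain c e where qe: "q = (c,e)" by (cases q)
  note bp = Mex_bounds[OF p[unfolded pe]] and bq = Mex_bounds[OF q[unfolded qe]]
  show ?thesis
  proof (cases "b = e")
    case True
    then show ?thesis using H p q unfolding pe qe by (simp add: dex_same)
  next
    case False
    have s0b: "(0,b) \<in> Mex" "(1,b) \<in> Mex" "(0,e) \<in> Mex" "(1,e) \<in> Mex"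
      using bp bq by (auto intro: side_in)
    have l1: "\<bar>f (a,b) - f (0,b)\<bar> \<le> L * a" using H[OF p[unfolded pe] s0b(1)] bp by simp
    have l2: "\<bar>f (0,b) - f (0,e)\<bar> \<le> L * \<bar>b - e\<bar>" using V0 bp bq by simp
    have l3: "\<bar>f (0,e) - f (c,e)\<bar> \<le> L * c" using H[OF s0b(3) q[unfolded qe]] bq by simp
    have r1: "\<bar>f (a,b) - f (1,b)\<bar> \<le> L * (1-a)" using H[OF p[unfolded pe] s0b(2)] bp by simp
    have r2: "\<bar>f (1,b) - f (1,e)\<bar> \<le> L * \<bar>b - e\<bar>" using V1 bp bq by simp
    have r3: "\<bar>f (1,e) - f (c,e)\<bar> \<le> L * (1-c)" using H[OF s0b(4) q[unfolded qe]] bq by simp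
    have A: "\<bar>f (a,b) - f (c,e)\<bar> \<le> L * (a + c + \<bar>b - e\<bar>)"
      using l1 l2 l3 by (simp add: algebra_simps)
    have B: "\<bar>f (a,b) - f (c,e)\<bar> \<le> L * ((2 - a - c) + \<bar>b - e\<bar>)"
      using r1 r2 r3 by (simp add: algebra_simps)
    have "min (a+c) (2-a-c) + \<bar>b - e\<bar> = min (a + c + \<bar>b - e\<bar>) ((2 - a - c) + \<bar>b - e\<bar>)" by simp
    then have "L * dex p q = min (L * (a + c + \<bar>b - e\<bar>)) (L * ((2 - a - c) + \<bar>b - e\<bar>))"
      using False L unfolding pe qe by (simp add: dex_diff min_mult_distrib_left)
    then show ?thesis using A B unfolding pe qe by simp
  qed
qed


abbreviation "LZ \<equiv> lip0 Mex dex (0,0)"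
abbreviation "LN f \<equiv> lipnorm Mex dex f"
abbreviation "FS \<equiv> free_space Mex dex (0,0)"
abbreviation "DN \<mu> \<equiv> dnorm Mex dex (0,0) \<mu>"

lemma zero_in_Mex: "(0::real,0::real) \<in> Mex" by (rule side_in) auto
lemma q_in_Mex: "(1::real,0::real) \<in> Mex" by (rule side_in) auto

definition lipset where "lipset f = {\<bar>f p - f q\<bar> / dex p q | p q. p \<in> Mex \<and> q \<in> Mex \<and> p \<noteq> q}"

lemma LN_def': "LN f = Sup (lipset f)" by (simp add: lipnorm_def lipset_def)

lemma lipset_ne: "lipset f \<noteq> {}"
proof -
  have ne: "(1::real,0::real) \<noteq> (0,0)" by simp
  show ?thesis unfolding lipset_def using zero_in_Mex q_in_Mex ne by blast
qed

lemma lipset_bdd: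
  assumes "\<forall>p\<in>Mex. \<forall>q\<in>Mex. \<bar>f p - f q\<bar> \<le> L * dex p q"
  shows "bdd_above (lipset f)" "\<forall>z\<in>lipset f. z \<le> L"
proof -
  show "\<forall>z\<in>lipset f. z \<le> L"
  proof
    fix z assume "z \<in> lipset f"
    then obtain p q where pq: "p \<in> Mex" "q \<in> Mex" "p \<noteq> q" "z = \<bar>f p - f q\<bar> / dex p q"
      unfolding lipset_def by blast
    have "dex p q > 0" using dex_pos pq by auto
    then show "z \<le> L" using assms pq by (simp add: divide_le_eq)
  qed
  then show "bdd_above (lipset f)" by (auto simp: bdd_above_def)
qed

lemma lipnorm_le:
  assumes "\<forall>p\<in>Mex. \<forall>q\<in>Mex. \<bar>f p - f q\<bar> \<le> L * dex p q"
  shows "LN f \<le> L"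
  unfolding LN_def' using lipset_bdd[OF assms] lipset_ne by (meson cSup_least)

lemma lz_lip: "f \<in> LZ \<Longrightarrow> \<exists>L. \<forall>p\<in>Mex. \<forall>q\<in>Mex. \<bar>f p - f q\<bar> \<le> L * dex p q"
  unfolding lip0_def by blast

lemma lip_le:
  assumes f: "f \<in> LZ" and p: "p \<in> Mex" and q: "q \<in> Mex"
  shows "\<bar>f p - f q\<bar> \<le> LN f * dex p q"
proof (cases "p = q")
  case True then show ?thesis by (cases q) (simp add: dex_def)
next
  case False
  obtain L where L: "\<forall>p\<in>Mex. \<forall>q\<in>Mex. \<bar>f p - f q\<bar> \<le> L * dex p q" using lz_lip[OF f] by blast
  have "\<bar>f p - f q\<bar> / dex p q \<in> lipset f" unfolding lipset_def using p q False by blast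
  then have "\<bar>f p - f q\<bar> / dex p q \<le> LN f"
    unfolding LN_def' using lipset_bdd(1)[OF L] by (meson cSup_upper)
  moreover have "dex p q > 0" using dex_pos p q False by auto
  ultimately show ?thesis by (simp add: divide_le_eq)
qed

lemma lipnorm_nonneg: assumes "f \<in> LZ" shows "LN f \<ge> 0"
proof -
  have "\<bar>f (1,0) - f (0,0)\<bar> \<le> LN f * dex (1,0) (0,0)" using lip_le[OF assms q_in_Mex zero_in_Mex] .
  moreover have "dex (1::real,0::real) (0,0) = 1" by (simp add: dex_def)
  moreover have "f (0,0) = 0" using assms unfolding lip0_def by simp
  ultimately show ?thesis by simp
qed

lemma lip0I:
  assumes "f (0,0) = 0" "\<And>x. x \<notin> Mex \<Longrightarrow> f x = 0" "\<forall>p\<in>Mex. \<forall>q\<in>Mex. \<bar>f p - f q\<bar> \<le> L * dex p q"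
  shows "f \<in> LZ"
  using assms unfolding lip0_def by blast

lemma lip0_comb:
  assumes f: "f \<in> LZ" and g: "g \<in> LZ"
  shows "(\<lambda>p. a * f p + b * g p) \<in> LZ"
proof -
  obtain L1 where L1: "\<forall>p\<in>Mex. \<forall>q\<in>Mex. \<bar>f p - f q\<bar> \<le> L1 * dex p q" using lz_lip[OF f] by blast
  obtain L2 where L2: "\<forall>p\<in>Mex. \<forall>q\<in>Mex. \<bar>g p - g q\<bar> \<le> L2 * dex p q" using lz_lip[OF g] by blast
  have "\<forall>p\<in>Mex. \<forall>q\<in>Mex. \<bar>(a * f p + b * g p) - (a * f q + b * g q)\<bar> \<le> (\<bar>a\<bar> * L1 + \<bar>b\<bar> * L2) * dex p q"
  proof (intro ballI)
    fix p q assume p: "p \<in> Mex" and q: "q \<in> Mex"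
    have "\<bar>(a * f p + b * g p) - (a * f q + b * g q)\<bar> \<le> \<bar>a\<bar> * \<bar>f p - f q\<bar> + \<bar>b\<bar> * \<bar>g p - g q\<bar>"
    proof -
      have e: "(a * f p + b * g p) - (a * f q + b * g q) = a * (f p - f q) + b * (g p - g q)"
        by (simp add: algebra_simps)
      show ?thesis unfolding e using abs_triangle_ineq[of "a * (f p - f q)" "b * (g p - g q)"]
        by (simp add: abs_mult)
    qed
    also have "\<dots> \<le> \<bar>a\<bar> * (L1 * dex p q) + \<bar>b\<bar> * (L2 * dex p q)"
      using L1 L2 p q by (intro add_mono mult_left_mono) auto
    finally show "\<bar>(a * f p + b * g p) - (a * f q + b * g q)\<bar> \<le> (\<bar>a\<bar> * L1 + \<bar>b\<bar> * L2) * dex p q"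
      by (simp add: algebra_simps)
  qed
  then show ?thesis using f g unfolding lip0_def by auto
qed

lemma eps_zero: assumes K: "K \<ge> 0" and h: "\<And>e. e > 0 \<Longrightarrow> \<bar>z::real\<bar> \<le> e * K" shows "z = 0"
proof (rule ccontr)
  assume "z \<noteq> 0"
  then have zp: "\<bar>z\<bar> > 0" by simp
  have "\<bar>z\<bar> \<le> (\<bar>z\<bar> / (K+1)) * K" using h[of "\<bar>z\<bar> / (K+1)"] zp K by simp
  also have "\<dots> < \<bar>z\<bar>" using zp K by (simp add: field_simps)
  finally show False by simp
qed

lemma fs_lin:
  assumes mu: "\<mu> \<in> FS" and f: "f \<in> LZ" and g: "g \<in> LZ"
  shows "\<mu> (\<lambda>p. a * f p + b * g p) = a * \<mu> f + b * \<mu> g"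
proof -
  define h where "h = (\<lambda>p. a * f p + b * g p)"
  have h: "h \<in> LZ" unfolding h_def using lip0_comb[OF f g] .
  define K where "K = LN h + \<bar>a\<bar> * LN f + \<bar>b\<bar> * LN g"
  have K: "K \<ge> 0" unfolding K_def using lipnorm_nonneg[OF h] lipnorm_nonneg[OF f] lipnorm_nonneg[OF g] by simp
  have "\<mu> h - (a * \<mu> f + b * \<mu> g) = 0"
  proof (rule eps_zero[OF K])
    fix e :: real assume e: "e > 0"
    obtain S c where Sc: "finite S" "S \<subseteq> Mex"
      "\<forall>f\<in>LZ. \<bar>\<mu> f - (\<Sum>x\<in>S. c x * f x)\<bar> \<le> e * LN f"
      using mu e unfolding free_space_def by blast
    have eh: "\<bar>\<mu> h - (\<Sum>x\<in>S. c x * h x)\<bar> \<le> e * LN h" using Sc h by blast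
    have ef: "\<bar>\<mu> f - (\<Sum>x\<in>S. c x * f x)\<bar> \<le> e * LN f" using Sc f by blast
    have eg: "\<bar>\<mu> g - (\<Sum>x\<in>S. c x * g x)\<bar> \<le> e * LN g" using Sc g by blast
    have sh: "(\<Sum>x\<in>S. c x * h x) = a * (\<Sum>x\<in>S. c x * f x) + b * (\<Sum>x\<in>S. c x * g x)"
      unfolding h_def by (simp add: sum_distrib_left sum.distrib algebra_simps)
    have ef': "\<bar>a * \<mu> f - a * (\<Sum>x\<in>S. c x * f x)\<bar> \<le> \<bar>a\<bar> * (e * LN f)"
    proof -
      have "\<bar>a * \<mu> f - a * (\<Sum>x\<in>S. c x * f x)\<bar> = \<bar>a\<bar> * \<bar>\<mu> f - (\<Sum>x\<in>S. c x * f x)\<bar>"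
        by (simp add: abs_mult[symmetric] right_diff_distrib)
      then show ?thesis using ef by (simp add: mult_left_mono)
    qed
    have eg': "\<bar>b * \<mu> g - b * (\<Sum>x\<in>S. c x * g x)\<bar> \<le> \<bar>b\<bar> * (e * LN g)"
    proof -
      have "\<bar>b * \<mu> g - b * (\<Sum>x\<in>S. c x * g x)\<bar> = \<bar>b\<bar> * \<bar>\<mu> g - (\<Sum>x\<in>S. c x * g x)\<bar>"
        by (simp add: abs_mult[symmetric] right_diff_distrib)
      then show ?thesis using eg by (simp add: mult_left_mono)
    qed
    have "\<bar>\<mu> h - (a * \<mu> f + b * \<mu> g)\<bar> \<le> e * LN h + \<bar>a\<bar> * (e * LN f) + \<bar>b\<bar> * (e * LN g)"
      using eh ef' eg' sh by linarith
    then show "\<bar>\<mu> h - (a * \<mu> f + b * \<mu> g)\<bar> \<le> e * K" unfolding K_def by (simp add: algebra_simps)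
  qed
  then show ?thesis unfolding h_def by simp
qed

lemma lz_base: "f \<in> LZ \<Longrightarrow> f (0,0) = 0" unfolding lip0_def by simp
lemma lz_out: "f \<in> LZ \<Longrightarrow> x \<notin> Mex \<Longrightarrow> f x = 0" unfolding lip0_def by (cases x) auto

lemma fs_bdd:
  assumes mu: "\<mu> \<in> FS"
  shows "\<exists>B. \<forall>f\<in>LZ. LN f \<le> 1 \<longrightarrow> \<bar>\<mu> f\<bar> \<le> B"
proof -
  obtain S c where Sc: "finite S" "S \<subseteq> Mex"
      "\<forall>f\<in>LZ. \<bar>\<mu> f - (\<Sum>x\<in>S. c x * f x)\<bar> \<le> 1 * LN f"
  proof -
    have "\<forall>e>0. \<exists>S c. finite S \<and> S \<subseteq> Mex \<and> (\<forall>f\<in>LZ. \<bar>\<mu> f - (\<Sum>x\<in>S. c x * f x)\<bar> \<le> e * LN f)"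
      using mu unfolding free_space_def by blast
    from this[rule_format, of 1] show ?thesis using that by auto
  qed
  have "\<forall>f\<in>LZ. LN f \<le> 1 \<longrightarrow> \<bar>\<mu> f\<bar> \<le> 1 + (\<Sum>x\<in>S. \<bar>c x\<bar> * dex x (0,0))"
  proof (intro ballI impI)
    fix f assume f: "f \<in> LZ" and n: "LN f \<le> 1"
    have "\<bar>(\<Sum>x\<in>S. c x * f x)\<bar> \<le> (\<Sum>x\<in>S. \<bar>c x * f x\<bar>)" by (rule sum_abs)
    also have "\<dots> \<le> (\<Sum>x\<in>S. \<bar>c x\<bar> * dex x (0,0))"
    proof (rule sum_mono)
      fix x assume x: "x \<in> S"
      then have xm: "x \<in> Mex" using Sc by auto
      have "\<bar>f x - f (0,0)\<bar> \<le> LN f * dex x (0,0)" using lip_le[OF f xm zero_in_Mex] .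
      also have "\<dots> \<le> dex x (0,0)" using n dex_nonneg[OF xm zero_in_Mex] lipnorm_nonneg[OF f]
        by (simp add: mult_left_le_one_le)
      finally have "\<bar>f x\<bar> \<le> dex x (0,0)" using lz_base[OF f] by simp
      then show "\<bar>c x * f x\<bar> \<le> \<bar>c x\<bar> * dex x (0,0)" by (simp add: abs_mult mult_left_mono)
    qed
    finally have "\<bar>(\<Sum>x\<in>S. c x * f x)\<bar> \<le> (\<Sum>x\<in>S. \<bar>c x\<bar> * dex x (0,0))" .
    moreover have "\<bar>\<mu> f - (\<Sum>x\<in>S. c x * f x)\<bar> \<le> 1" using Sc f n by force
    ultimately show "\<bar>\<mu> f\<bar> \<le> 1 + (\<Sum>x\<in>S. \<bar>c x\<bar> * dex x (0,0))" by linarith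
  qed
  then show ?thesis by blast
qed

definition dset where "dset \<mu> = {\<bar>\<mu> f\<bar> | f. f \<in> LZ \<and> LN f \<le> 1}"
lemma DN_def': "DN \<mu> = Sup (dset \<mu>)" by (simp add: dnorm_def dset_def)

lemma zero_lz: "(\<lambda>p. 0) \<in> LZ" by (rule lip0I[where L=0]) auto
lemma zero_LN: "LN (\<lambda>p. 0) \<le> 1" by (rule lipnorm_le) (auto intro: dex_nonneg)

lemma dset_ne: "dset \<mu> \<noteq> {}" unfolding dset_def using zero_lz zero_LN by blast

lemma dn_ge:
  assumes B: "\<exists>B. \<forall>f\<in>LZ. LN f \<le> 1 \<longrightarrow> \<bar>\<mu> f\<bar> \<le> B" and f: "f \<in> LZ" and n: "LN f \<le> 1"
  shows "\<bar>\<mu> f\<bar> \<le> DN \<mu>"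
proof -
  have "bdd_above (dset \<mu>)" using B unfolding dset_def bdd_above_def by blast
  moreover have "\<bar>\<mu> f\<bar> \<in> dset \<mu>" unfolding dset_def using f n by blast
  ultimately show ?thesis unfolding DN_def' by (rule cSup_upper[rotated])
qed

lemma dn_gt:
  assumes B: "\<exists>B. \<forall>f\<in>LZ. LN f \<le> 1 \<longrightarrow> \<bar>\<mu> f\<bar> \<le> B" and c: "c < DN \<mu>"
  shows "\<exists>f\<in>LZ. LN f \<le> 1 \<and> c < \<bar>\<mu> f\<bar>"
proof -
  have "bdd_above (dset \<mu>)" using B unfolding dset_def bdd_above_def by blast
  then obtain z where "z \<in> dset \<mu>" "c < z" using c dset_ne unfolding DN_def' by (meson less_cSup_iff)
  then show ?thesis unfolding dset_def by blast
qed


definition dq :: "((real \<times> real \<Rightarrow> real) \<Rightarrow> real)" where "dq = (\<lambda>f. if f \<in> LZ then f (1,0) else 0)"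
definition h0 :: "real \<times> real \<Rightarrow> real" where "h0 p = (if p \<in> Mex then snd p / 2 + fst p * (1 - snd p) else 0)"

lemma h0_lip: "p \<in> Mex \<Longrightarrow> q \<in> Mex \<Longrightarrow> \<bar>h0 p - h0 q\<bar> \<le> 1 * dex p q"
proof (rule lipM)
  fix a b c assume ab: "(a,b) \<in> Mex" and cb: "(c,b) \<in> Mex"
  have "h0 (a,b) - h0 (c,b) = (a - c) * (1 - b)" using ab cb by (simp add: h0_def algebra_simps)
  moreover have "0 \<le> 1 - b" "1 - b \<le> 1" using Mex_bounds[OF ab] by auto
  ultimately show "\<bar>h0 (a,b) - h0 (c,b)\<bar> \<le> 1 * \<bar>a - c\<bar>" by (simp add: abs_mult mult_left_le_one_le mult.commute)
next
  fix b e :: real assume "0 \<le> b" "b \<le> 1/2" "0 \<le> e" "e \<le> 1/2"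
  then have "(0,b) \<in> Mex" "(0,e) \<in> Mex" "(1,b) \<in> Mex" "(1,e) \<in> Mex" by (auto intro: side_in)
  then show "\<bar>h0 (0,b) - h0 (0,e)\<bar> \<le> 1 * \<bar>b - e\<bar>" "\<bar>h0 (1,b) - h0 (1,e)\<bar> \<le> 1 * \<bar>b - e\<bar>"
    by (auto simp: h0_def abs_if)
qed auto

lemma h0_lz: "h0 \<in> LZ" 
proof (rule lip0I[where L=1])
  show "h0 (0,0) = 0" by (simp add: h0_def)
  show "h0 x = 0" if "x \<notin> Mex" for x using that by (simp add: h0_def)
  show "\<forall>p\<in>Mex. \<forall>q\<in>Mex. \<bar>h0 p - h0 q\<bar> \<le> 1 * dex p q" using h0_lip by blast
qed

lemma h0_LN: "LN h0 \<le> 1" by (rule lipnorm_le) (use h0_lip in blast)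
lemma h0_q: "h0 (1,0) = 1" using q_in_Mex by (simp add: h0_def)

lemma lz_q: assumes "f \<in> LZ" shows "\<bar>f (1,0)\<bar> \<le> LN f"
proof -
  have "\<bar>f (1,0) - f (0,0)\<bar> \<le> LN f * dex (1,0) (0,0)" using lip_le[OF assms q_in_Mex zero_in_Mex] .
  moreover have "dex (1::real,0::real) (0,0) = 1" by (simp add: dex_def)
  ultimately show ?thesis using lz_base[OF assms] by simp
qed

lemma dq_fs: "dq \<in> FS"
  unfolding free_space_def
proof (intro CollectI conjI allI impI)
  fix f assume "f \<notin> LZ" then show "dq f = 0" by (simp add: dq_def)
next
  fix e :: real assume e: "e > 0"
  show "\<exists>S c. finite S \<and> S \<subseteq> Mex \<and> (\<forall>f\<in>LZ. \<bar>dq f - (\<Sum>x\<in>S. c x * f x)\<bar> \<le> e * LN f)"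
    by (rule exI[of _ "{(1,0)}"], rule exI[of _ "\<lambda>_. 1"])
       (use e q_in_Mex lipnorm_nonneg in \<open>auto simp: dq_def\<close>)
qed

lemma dq_bdd: "\<exists>B. \<forall>f\<in>LZ. LN f \<le> 1 \<longrightarrow> \<bar>dq f\<bar> \<le> B"
proof (intro exI[of _ 1] ballI impI)
  fix f assume "f \<in> LZ" "LN f \<le> 1"
  then show "\<bar>dq f\<bar> \<le> 1" using lz_q[of f] by (simp add: dq_def)
qed

lemma dq_norm: "DN dq = 1"
proof (rule antisym)
  show "DN dq \<le> 1" unfolding DN_def'
  proof (rule cSup_least[OF dset_ne])
    fix z assume "z \<in> dset dq"
    then obtain f where "f \<in> LZ" "LN f \<le> 1" "z = \<bar>dq f\<bar>" unfolding dset_def by blast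
    then show "z \<le> 1" using lz_q[of f] by (simp add: dq_def)
  qed
  have "\<bar>dq h0\<bar> \<le> DN dq" by (rule dn_ge[OF dq_bdd h0_lz h0_LN])
  then show "1 \<le> DN dq" using h0_lz h0_q by (simp add: dq_def)
qed

definition onr :: "nat \<Rightarrow> real \<times> real \<Rightarrow> bool" where
  "onr N p \<longleftrightarrow> (\<exists>n>N. snd p = 1/2^n \<and> 0 < fst p \<and> fst p < 1)"

lemma half_pow_inj: "(1::real)/2^m = 1/2^n \<longleftrightarrow> m = n"
proof
  assume "(1::real)/2^m = 1/2^n"
  then have "(2::real)^m = 2^n" by (simp add: field_simps)
  then show "m = n" by (simp add: power_inject_exp)
qed simp

lemma onr_pt: "onr N (a, 1/2^n) \<longleftrightarrow> (n > N \<and> 0 < a \<and> a < 1)"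
  unfolding onr_def by (auto simp: half_pow_inj)

lemma onr_Mex: "onr N p \<Longrightarrow> p \<in> Mex"
  unfolding onr_def by (cases p) (auto simp: Mex_iff)

lemma onr_mono: "N \<le> N' \<Longrightarrow> onr N' p \<Longrightarrow> onr N p"
  unfolding onr_def by (meson le_less_trans)

definition Zs :: "nat \<Rightarrow> (real \<times> real \<Rightarrow> real) \<Rightarrow> bool" where
  "Zs N G \<longleftrightarrow> G \<in> LZ \<and> LN G \<le> 1 \<and> (\<forall>p. \<not> onr N p \<longrightarrow> G p = 0)"

lemma Zlip:
  assumes van: "\<And>p. \<not> onr N p \<Longrightarrow> G p = 0"
    and rung: "\<And>n a c. n \<ge> 1 \<Longrightarrow> 0 \<le> a \<Longrightarrow> a \<le> 1 \<Longrightarrow> 0 \<le> c \<Longrightarrow> c \<le> 1 \<Longrightarrow>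
        \<bar>G (a, 1/2^n) - G (c, 1/2^n)\<bar> \<le> \<bar>a - c\<bar>"
  shows "Zs N G"
proof -
  have side: "G (s, b) = 0" if "s = 0 \<or> s = 1" for s b
    using van[of "(s,b)"] that unfolding onr_def by auto
  have L: "\<forall>p\<in>Mex. \<forall>q\<in>Mex. \<bar>G p - G q\<bar> \<le> 1 * dex p q"
  proof (intro ballI, rule lipM)
    fix a b c assume ab: "(a,b) \<in> Mex" and cb: "(c,b) \<in> Mex"
    show "\<bar>G (a,b) - G (c,b)\<bar> \<le> 1 * \<bar>a - c\<bar>"
    proof (cases "\<exists>n\<ge>1. b = 1/2^n")
      case True
      then obtain n where "n \<ge> 1" "b = 1/2^n" by blast
      then show ?thesis using rung[of n a c] Mex_bounds[OF ab] Mex_bounds[OF cb] by simp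
    next
      case False
      then have "(a = 0 \<or> a = 1)" "(c = 0 \<or> c = 1)" using ab cb unfolding Mex_iff by auto
      then show ?thesis using side by auto
    qed
  qed (auto simp: side)
  have "G \<in> LZ" by (rule lip0I[OF _ _ L]) (auto simp: side intro: van dest: onr_Mex)
  moreover have "LN G \<le> 1" by (rule lipnorm_le) (use L in auto)
  ultimately show ?thesis unfolding Zs_def using van by blast
qed

lemma Zs_rung:
  assumes "Zs N G" "n \<ge> 1" "0 \<le> a" "a \<le> 1" "0 \<le> c" "c \<le> 1"
  shows "\<bar>G (a, 1/2^n) - G (c, 1/2^n)\<bar> \<le> \<bar>a - c\<bar>"
proof -
  have m: "(a, 1/2^n) \<in> Mex" "(c, 1/2^n) \<in> Mex" using assms unfolding Mex_iff by auto
  have "\<bar>G (a, 1/2^n) - G (c, 1/2^n)\<bar> \<le> LN G * dex (a, 1/2^n) (c, 1/2^n)"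
    using lip_le m assms(1) unfolding Zs_def by blast
  also have "\<dots> \<le> \<bar>a - c\<bar>" using assms(1) unfolding Zs_def dex_same
    using mult_left_le_one_le[OF abs_ge_zero lipnorm_nonneg, of G "a - c"] by simp
  finally show ?thesis .
qed

lemma onr_rung: "0 \<le> a \<Longrightarrow> a \<le> 1 \<Longrightarrow> Zs N G \<Longrightarrow>
   (if onr N' (a, 1/2^n) then P else G (a, 1/2^n)) = (if N' < n then (if 0 < a \<and> a < 1 then P else 0) else G (a, 1/2^n))"
  unfolding Zs_def by (auto simp: onr_pt)

lemma Zs_trunc1:
  assumes "Zs N G" shows "Zs N (\<lambda>p. if onr N' p then 0 else G p)"
proof (rule Zlip)
  fix p assume "\<not> onr N p" then show "(if onr N' p then 0 else G p) = 0" using assms unfolding Zs_def by (cases p) auto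
next
  fix n :: nat and a c :: real assume h: "n \<ge> 1" "0 \<le> a" "a \<le> 1" "0 \<le> c" "c \<le> 1"
  show "\<bar>(if onr N' (a, 1/2^n) then 0 else G (a, 1/2^n)) - (if onr N' (c, 1/2^n) then 0 else G (c, 1/2^n))\<bar> \<le> \<bar>a - c\<bar>"
    using h onr_rung[OF _ _ assms, of a N' n 0] onr_rung[OF _ _ assms, of c N' n 0] Zs_rung[OF assms h]
    by auto
qed

lemma Zs_trunc2:
  assumes "Zs N G" "N \<le> N'" shows "Zs N' (\<lambda>p. if onr N' p then G p else 0)"
proof (rule Zlip)
  fix p assume "\<not> onr N' p" then show "(if onr N' p then G p else 0) = 0" by auto
next
  fix n :: nat and a c :: real assume h: "n \<ge> 1" "0 \<le> a" "a \<le> 1" "0 \<le> c" "c \<le> 1"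
  have e: "(if onr N' (x, 1/2^n) then G (x, 1/2^n) else 0) = (if N' < n then G (x, 1/2^n) else 0)"
    if "0 \<le> x" "x \<le> 1" for x
    using that assms unfolding Zs_def by (auto simp: onr_pt)
  show "\<bar>(if onr N' (a, 1/2^n) then G (a, 1/2^n) else 0) - (if onr N' (c, 1/2^n) then G (c, 1/2^n) else 0)\<bar> \<le> \<bar>a - c\<bar>"
    using h e[of a] e[of c] Zs_rung[OF assms(1) h] by auto
qed

lemma eventually_not_onr: "eventually (\<lambda>N. \<not> onr N x) sequentially"
proof (cases "snd x > 0")
  case False
  then show ?thesis unfolding onr_def by (auto intro!: always_eventually)
next
  case True
  obtain N1 where N1: "(1/2::real)^N1 < snd x" using real_arch_pow_inv[OF True, of "1/2"] by auto
  show ?thesis unfolding eventually_sequentially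
  proof (intro exI[of _ N1] allI impI notI)
    fix N assume N: "N1 \<le> N" and o: "onr N x"
    then obtain n where n: "n > N" "snd x = 1/2^n" unfolding onr_def by blast
    have "(1/2::real)^n \<le> (1/2)^N1" using n N by (intro power_decreasing) auto
    then show False using N1 n by (simp add: power_one_over)
  qed
qed

lemma tail:
  assumes mu: "\<mu> \<in> FS" and eta: "\<eta> > 0"
  shows "\<exists>N0. \<forall>N\<ge>N0. \<forall>G. Zs N G \<longrightarrow> \<bar>\<mu> G\<bar> \<le> \<eta>"
proof -
  have "\<forall>e>0. \<exists>S c. finite S \<and> S \<subseteq> Mex \<and> (\<forall>f\<in>LZ. \<bar>\<mu> f - (\<Sum>x\<in>S. c x * f x)\<bar> \<le> e * LN f)"
    using mu unfolding free_space_def by blast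
  from this[rule_format, OF eta] obtain S c where Sc: "finite S" "S \<subseteq> Mex"
    "\<forall>f\<in>LZ. \<bar>\<mu> f - (\<Sum>x\<in>S. c x * f x)\<bar> \<le> \<eta> * LN f" by blast
  have "eventually (\<lambda>N. \<forall>x\<in>S. \<not> onr N x) sequentially"
    using Sc(1) eventually_not_onr by (simp add: eventually_ball_finite)
  then obtain N0 where N0: "\<forall>N\<ge>N0. \<forall>x\<in>S. \<not> onr N x" unfolding eventually_sequentially by blast
  show ?thesis
  proof (intro exI[of _ N0] allI impI)
    fix N G assume N: "N \<ge> N0" and Z: "Zs N G"
    have "(\<Sum>x\<in>S. c x * G x) = 0" using N0 N Z unfolding Zs_def by (auto intro!: sum.neutral)
    moreover have "\<bar>\<mu> G - (\<Sum>x\<in>S. c x * G x)\<bar> \<le> \<eta> * LN G" using Sc Z unfolding Zs_def by blast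
    moreover have "\<eta> * LN G \<le> \<eta>" using Z eta unfolding Zs_def by (simp add: mult_left_le_one_le lipnorm_nonneg)
    ultimately show "\<bar>\<mu> G\<bar> \<le> \<eta>" by simp
  qed
qed

lemma wn:
  assumes w: "weakly_null Mex dex (0,0) y" and G: "G \<in> LZ" "LN G \<le> 1"
  shows "(\<lambda>i. y i G) \<longlonglongrightarrow> 0"
proof -
  have "(\<forall>\<mu>\<in>FS. \<forall>\<nu>\<in>FS. \<forall>a b. (\<lambda>\<mu>. \<mu> G) (\<lambda>f. a * \<mu> f + b * \<nu> f) = a * (\<lambda>\<mu>. \<mu> G) \<mu> + b * (\<lambda>\<mu>. \<mu> G) \<nu>) \<and>
        (\<exists>C. \<forall>\<mu>\<in>FS. \<bar>(\<lambda>\<mu>. \<mu> G) \<mu>\<bar> \<le> C * DN \<mu>)"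
  proof -
    have "\<bar>\<mu> G\<bar> \<le> 1 * DN \<mu>" if "\<mu> \<in> FS" for \<mu> using dn_ge[OF fs_bdd[OF that] G] by simp
    then have "\<forall>\<mu>\<in>FS. \<bar>\<mu> G\<bar> \<le> 1 * DN \<mu>" by simp
    then show ?thesis by blast
  qed
  moreover have A: "\<forall>\<phi> :: ((real \<times> real \<Rightarrow> real) \<Rightarrow> real) \<Rightarrow> real.
        (\<forall>\<mu>\<in>FS. \<forall>\<nu>\<in>FS. \<forall>a b. \<phi> (\<lambda>f. a * \<mu> f + b * \<nu> f) = a * \<phi> \<mu> + b * \<phi> \<nu>) \<and>
        (\<exists>C. \<forall>\<mu>\<in>FS. \<bar>\<phi> \<mu>\<bar> \<le> C * DN \<mu>) \<longrightarrow> (\<lambda>i. \<phi> (y i)) \<longlonglongrightarrow> 0"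
    using w unfolding weakly_null_def by blast
  ultimately show ?thesis using spec[OF A, of "\<lambda>\<mu>. \<mu> G"] by blast
qed


lemma bdd_add:
  fixes \<mu> \<nu> :: "(real \<times> real \<Rightarrow> real) \<Rightarrow> real" and c :: real
  assumes "\<exists>B. \<forall>f\<in>LZ. LN f \<le> 1 \<longrightarrow> \<bar>\<mu> f\<bar> \<le> B" "\<exists>B. \<forall>f\<in>LZ. LN f \<le> 1 \<longrightarrow> \<bar>\<nu> f\<bar> \<le> B"
  shows "\<exists>B. \<forall>f\<in>LZ. LN f \<le> 1 \<longrightarrow> \<bar>\<mu> f + c * \<nu> f\<bar> \<le> B"
proof -
  obtain B1 B2 where B: "\<forall>f\<in>LZ. LN f \<le> 1 \<longrightarrow> \<bar>\<mu> f\<bar> \<le> B1" "\<forall>f\<in>LZ. LN f \<le> 1 \<longrightarrow> \<bar>\<nu> f\<bar> \<le> B2"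
    using assms by blast
  have "\<forall>f\<in>LZ. LN f \<le> 1 \<longrightarrow> \<bar>\<mu> f + c * \<nu> f\<bar> \<le> B1 + \<bar>c\<bar> * B2"
  proof (intro ballI impI)
    fix f assume f: "f \<in> LZ" "LN f \<le> 1"
    have "\<bar>\<mu> f + c * \<nu> f\<bar> \<le> \<bar>\<mu> f\<bar> + \<bar>c\<bar> * \<bar>\<nu> f\<bar>" using abs_triangle_ineq[of "\<mu> f" "c * \<nu> f"] by (simp add: abs_mult)
    also have "\<dots> \<le> B1 + \<bar>c\<bar> * B2" using B f by (intro add_mono mult_left_mono) auto
    finally show "\<bar>\<mu> f + c * \<nu> f\<bar> \<le> B1 + \<bar>c\<bar> * B2" .
  qed
  then show ?thesis by blast
qed

lemma norming_small:
  assumes mu: "\<mu> \<in> FS" and p: "DN (\<lambda>f. dq f + \<mu> f) \<le> 1 + \<eta>" and m: "DN (\<lambda>f. dq f - \<mu> f) \<le> 1 + \<eta>"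
    and f: "f \<in> LZ" "LN f \<le> 1" "f (1,0) = 1"
  shows "\<bar>\<mu> f\<bar> \<le> \<eta>"
proof -
  have b1: "\<exists>B. \<forall>f\<in>LZ. LN f \<le> 1 \<longrightarrow> \<bar>dq f + 1 * \<mu> f\<bar> \<le> B" by (rule bdd_add[OF dq_bdd fs_bdd[OF mu]])
  have b2: "\<exists>B. \<forall>f\<in>LZ. LN f \<le> 1 \<longrightarrow> \<bar>dq f + (-1) * \<mu> f\<bar> \<le> B" by (rule bdd_add[OF dq_bdd fs_bdd[OF mu]])
  have "\<bar>(\<lambda>f. dq f + \<mu> f) f\<bar> \<le> DN (\<lambda>f. dq f + \<mu> f)" by (rule dn_ge) (use b1 f in auto)
  moreover have "\<bar>(\<lambda>f. dq f - \<mu> f) f\<bar> \<le> DN (\<lambda>f. dq f - \<mu> f)" by (rule dn_ge) (use b2 f in auto)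
  moreover have "dq f = 1" using f by (simp add: dq_def)
  ultimately show ?thesis using p m by (simp add: abs_le_iff)
qed

lemma neg_lz: "g \<in> LZ \<Longrightarrow> (\<lambda>p. (-1) * g p + 0 * g p) \<in> LZ" by (rule lip0_comb)

lemma neg_LN: assumes "g \<in> LZ" "LN g \<le> 1" shows "LN (\<lambda>p. (-1) * g p + 0 * g p) \<le> 1"
proof (rule lipnorm_le, intro ballI)
  fix p q assume "p \<in> Mex" "q \<in> Mex"
  then have "\<bar>g p - g q\<bar> \<le> LN g * dex p q" using lip_le assms by blast
  also have "\<dots> \<le> 1 * dex p q" using assms \<open>p \<in> Mex\<close> \<open>q \<in> Mex\<close> by (intro mult_right_mono dex_nonneg) auto
  finally show "\<bar>((-1) * g p + 0 * g p) - ((-1) * g q + 0 * g q)\<bar> \<le> 1 * dex p q" by (simp add: abs_minus_commute)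
qed

lemma get_g:
  assumes mu: "\<mu> \<in> FS" and c: "c < DN \<mu>"
  shows "\<exists>g\<in>LZ. LN g \<le> 1 \<and> c < \<mu> g"
proof -
  obtain g where g: "g \<in> LZ" "LN g \<le> 1" "c < \<bar>\<mu> g\<bar>" using dn_gt[OF fs_bdd[OF mu] c] by blast
  show ?thesis
  proof (cases "\<mu> g \<ge> 0")
    case True then show ?thesis using g by auto
  next
    case False
    have "\<mu> (\<lambda>p. (-1) * g p + 0 * g p) = - \<mu> g" using fs_lin[OF mu g(1) g(1), of "-1" 0] by simp
    then show ?thesis using neg_lz[OF g(1)] neg_LN[OF g(1,2)] g(3) False by (intro bexI[of _ "\<lambda>p. (-1) * g p + 0 * g p"]) auto
  qed
qed


lemma absmul_le: "\<bar>\<sigma>\<bar> \<le> s \<Longrightarrow> \<bar>t\<bar> \<le> T \<Longrightarrow> \<bar>\<sigma> * t\<bar> \<le> s * (T::real)"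
  by (simp add: abs_mult mult_mono')

definition ell :: "(real \<times> real \<Rightarrow> real) \<Rightarrow> real \<times> real \<Rightarrow> real" where
  "ell g p = g (0, snd p) + fst p * (g (1, snd p) - g (0, snd p))"
definition GG :: "nat \<Rightarrow> (real \<times> real \<Rightarrow> real) \<Rightarrow> real \<times> real \<Rightarrow> real" where
  "GG N g p = (if onr N p then (g p - ell g p) / 2 else 0)"
definition WW :: "nat \<Rightarrow> (real \<times> real \<Rightarrow> real) \<Rightarrow> real \<times> real \<Rightarrow> real" where
  "WW N g p = 2 * GG N g p + g (1,0) * h0 p"
definition UU :: "nat \<Rightarrow> (real \<times> real \<Rightarrow> real) \<Rightarrow> real \<times> real \<Rightarrow> real" where
  "UU N g p = 1 * g p + (-1) * WW N g p"
definition FF :: "nat \<Rightarrow> (real \<times> real \<Rightarrow> real) \<Rightarrow> real \<Rightarrow> real \<times> real \<Rightarrow> real" where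
  "FF N g \<sigma> p = 1 * h0 p + \<sigma> * UU N g p"

lemma h0_pt: "(x,b) \<in> Mex \<Longrightarrow> h0 (x,b) = b/2 + x * (1 - b)" by (simp add: h0_def)

lemma glip: "g \<in> LZ \<Longrightarrow> LN g \<le> 1 \<Longrightarrow> p \<in> Mex \<Longrightarrow> q \<in> Mex \<Longrightarrow> \<bar>g p - g q\<bar> \<le> dex p q"
  using lip_le[of g p q] mult_right_mono[of "LN g" 1 "dex p q"] dex_nonneg[of p q] by auto

lemma gfacts:
  assumes g: "g \<in> LZ" "LN g \<le> 1" and b: "0 \<le> b" "b \<le> 1/2"
  shows "\<bar>g (1,b) - g (1,0)\<bar> \<le> b" "\<bar>g (0,b)\<bar> \<le> b" "\<bar>g (1,b) - g (0,b)\<bar> \<le> 1"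
    "\<bar>g (1,0)\<bar> \<le> 1"
proof -
  have m: "(0,b) \<in> Mex" "(1,b) \<in> Mex" "(0,0) \<in> Mex" "(1,0) \<in> Mex" using b by (auto intro: side_in)
  show "\<bar>g (1,b) - g (1,0)\<bar> \<le> b" using glip[OF g m(2) m(4)] b by (simp add: dex_side)
  show "\<bar>g (0,b)\<bar> \<le> b" using glip[OF g m(1) m(3)] b lz_base[OF g(1)] by (simp add: dex_side)
  show "\<bar>g (1,b) - g (0,b)\<bar> \<le> 1" using glip[OF g m(2) m(1)] by (simp add: dex_same)
  show "\<bar>g (1,0)\<bar> \<le> 1" using lz_q[OF g(1)] g(2) by simp
qed

lemma kappa_bound:
  assumes g: "g \<in> LZ" "LN g \<le> 1" and b: "0 \<le> b" "b \<le> 1/2"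
  shows "\<bar>g (1,b) - g (0,b) - g (1,0) * (1 - b)\<bar> \<le> 3 * b"
proof -
  note f = gfacts[OF g b]
  have e: "g (1,b) - g (0,b) - g (1,0) * (1 - b) = (g (1,b) - g (1,0)) - g (0,b) + g (1,0) * b"
    by (simp add: algebra_simps)
  have "\<bar>g (1,0) * b\<bar> \<le> 1 * b" using absmul_le[OF f(4), of b b] b by simp
  then show ?thesis unfolding e using f(1,2) by linarith
qed

lemma ell_end: "ell g (0,b) = g (0,b)" "ell g (1,b) = g (1,b)" by (simp_all add: ell_def)

lemma GG_Zs: assumes g: "g \<in> LZ" "LN g \<le> 1" shows "Zs N (GG N g)"
proof (rule Zlip)
  fix p assume "\<not> onr N p" then show "GG N g p = 0" by (simp add: GG_def)
next
  fix n :: nat and a c :: real assume h: "n \<ge> 1" "0 \<le> a" "a \<le> 1" "0 \<le> c" "c \<le> 1"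
  define b :: real where "b = 1/2^n"
  have b: "0 \<le> b" "b \<le> 1/2" unfolding b_def using pow_half_le[OF h(1)] by auto
  have e: "GG N g (x, b) = (if N < n then (g (x,b) - ell g (x,b)) / 2 else 0)" if "0 \<le> x" "x \<le> 1" for x
    using that unfolding GG_def b_def by (auto simp: onr_pt ell_def)
  have m: "(a,b) \<in> Mex" "(c,b) \<in> Mex" using h unfolding b_def Mex_iff by auto
  have d1: "\<bar>g (a,b) - g (c,b)\<bar> \<le> \<bar>a - c\<bar>" using glip[OF g m] by (simp add: dex_same)
  have d2: "\<bar>ell g (a,b) - ell g (c,b)\<bar> \<le> \<bar>a - c\<bar>"
  proof -
    have "ell g (a,b) - ell g (c,b) = (a - c) * (g (1,b) - g (0,b))" by (simp add: ell_def algebra_simps)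
    then show ?thesis using absmul_le[of "a - c" "\<bar>a - c\<bar>" "g (1,b) - g (0,b)" 1] gfacts(3)[OF g b] by simp
  qed
  have "\<bar>GG N g (a, b) - GG N g (c, b)\<bar> \<le> \<bar>a - c\<bar>"
  proof (cases "N < n")
    case True
    then have "GG N g (a, b) = (g (a,b) - ell g (a,b)) / 2" "GG N g (c, b) = (g (c,b) - ell g (c,b)) / 2"
      using e[of a] e[of c] h by auto
    then have "GG N g (a, b) - GG N g (c, b) = ((g (a,b) - g (c,b)) - (ell g (a,b) - ell g (c,b))) / 2"
      by (simp add: field_simps)
    moreover have "\<bar>(g (a,b) - g (c,b)) - (ell g (a,b) - ell g (c,b))\<bar> \<le> \<bar>g (a,b) - g (c,b)\<bar> + \<bar>ell g (a,b) - ell g (c,b)\<bar>"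
      by (rule abs_triangle_ineq4)
    ultimately show ?thesis using d1 d2 by simp
  next
    case False
    then show ?thesis using e[of a] e[of c] h by simp
  qed
  then show "\<bar>GG N g (a, 1/2^n) - GG N g (c, 1/2^n)\<bar> \<le> \<bar>a - c\<bar>" unfolding b_def .
qed

lemma WW_lz: "g \<in> LZ \<Longrightarrow> LN g \<le> 1 \<Longrightarrow> WW N g \<in> LZ"
  unfolding WW_def using lip0_comb[OF _ h0_lz] GG_Zs unfolding Zs_def by blast
lemma UU_lz: "g \<in> LZ \<Longrightarrow> LN g \<le> 1 \<Longrightarrow> UU N g \<in> LZ"
  unfolding UU_def using lip0_comb WW_lz by blast
lemma FF_lz: "g \<in> LZ \<Longrightarrow> LN g \<le> 1 \<Longrightarrow> FF N g \<sigma> \<in> LZ"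
  unfolding FF_def using lip0_comb[OF h0_lz UU_lz] by blast

lemma UU_not: "p \<in> Mex \<Longrightarrow> \<not> onr N p \<Longrightarrow> UU N g p = g p - g (1,0) * h0 p"
  by (simp add: UU_def WW_def GG_def)
lemma UU_aff: assumes "(x,b) \<in> Mex" "onr N (x,b) \<or> x = 0 \<or> x = 1"
  shows "UU N g (x,b) = ell g (x,b) - g (1,0) * h0 (x,b)"
proof (cases "onr N (x,b)")
  case True
  then have "UU N g (x,b) = g (x,b) - (g (x,b) - ell g (x,b)) - g (1,0) * h0 (x,b)"
    by (simp add: UU_def WW_def GG_def field_simps)
  then show ?thesis by simp
next
  case False
  then have "x = 0 \<or> x = 1" using assms by blast
  then show ?thesis using False by (auto simp: UU_def WW_def GG_def ell_def)
qed

lemma FF_q: "FF N g \<sigma> (1,0) = 1"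
proof -
  have "\<not> onr N (1,0)" by (simp add: onr_def)
  then show ?thesis using q_in_Mex h0_q by (simp add: FF_def UU_not)
qed


lemma tri_le: "\<bar>x\<bar> \<le> A \<Longrightarrow> \<bar>y\<bar> \<le> B \<Longrightarrow> \<bar>x + y\<bar> \<le> A + (B::real)"
  using abs_triangle_ineq[of x y] by linarith

lemma FF_lip:
  assumes g: "g \<in> LZ" "LN g \<le> 1" and N: "N \<ge> 1" and sig: "\<bar>\<sigma>\<bar> \<le> 1/2^(N+1)"
    and p: "p \<in> Mex" and q: "q \<in> Mex"
  shows "\<bar>FF N g \<sigma> p - FF N g \<sigma> q\<bar> \<le> 1 * dex p q"
proof -
  define s :: real where "s = 1/2^(N+1)"
  define \<gamma> where "\<gamma> = g (1,0)"
  have s_pos: "0 < s" unfolding s_def by simp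
  have "(2::real)^2 \<le> 2^(N+1)" using N by (intro power_increasing) auto
  then have s4: "s \<le> 1/4" unfolding s_def by (simp add: field_simps)
  have sig': "\<bar>\<sigma>\<bar> \<le> s" using sig unfolding s_def .
  have gam: "\<bar>\<gamma>\<bar> \<le> 1" unfolding \<gamma>_def using lz_q[OF g(1)] g(2) by simp
  show ?thesis
  proof (rule lipM[OF _ _ _ _ p q])
    fix a b c assume ab: "(a,b) \<in> Mex" and cb: "(c,b) \<in> Mex"
    note ba = Mex_bounds[OF ab] and bc = Mex_bounds[OF cb]
    define D where "D = \<bar>a - c\<bar>"
    have D0: "D \<ge> 0" unfolding D_def by simp
    show "\<bar>FF N g \<sigma> (a,b) - FF N g \<sigma> (c,b)\<bar> \<le> 1 * \<bar>a - c\<bar>"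
    proof (cases "(onr N (a,b) \<or> a = 0 \<or> a = 1) \<and> (onr N (c,b) \<or> c = 0 \<or> c = 1)")
      case True
      define \<kappa> where "\<kappa> = g (1,b) - g (0,b) - \<gamma> * (1 - b)"
      have ua: "UU N g (a,b) = ell g (a,b) - \<gamma> * h0 (a,b)" using UU_aff[OF ab] True unfolding \<gamma>_def by blast
      have uc: "UU N g (c,b) = ell g (c,b) - \<gamma> * h0 (c,b)" using UU_aff[OF cb] True unfolding \<gamma>_def by blast
      have e: "FF N g \<sigma> (a,b) - FF N g \<sigma> (c,b) = (a - c) * ((1 - b) + \<sigma> * \<kappa>)"
        unfolding FF_def ua uc h0_pt[OF ab] h0_pt[OF cb] \<kappa>_def by (simp add: ell_def algebra_simps)
      have k: "\<bar>\<kappa>\<bar> \<le> 3 * b" unfolding \<kappa>_def \<gamma>_def using kappa_bound[OF g ba(3,4)] .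
      have "\<bar>\<sigma> * \<kappa>\<bar> \<le> s * (3 * b)" by (rule absmul_le[OF sig' k])
      also have "\<dots> \<le> b"
      proof -
        have "s * 3 \<le> 1" using s4 by linarith
        then have "(s * 3) * b \<le> 1 * b" using ba(3) by (rule mult_right_mono)
        then show ?thesis by (simp add: mult.assoc)
      qed
      finally have "\<bar>(1 - b) + \<sigma> * \<kappa>\<bar> \<le> 1" using ba(4) by (simp add: abs_le_iff; linarith?)
      then have "\<bar>(a - c) * ((1 - b) + \<sigma> * \<kappa>)\<bar> \<le> \<bar>a - c\<bar> * 1" unfolding abs_mult by (intro mult_left_mono) auto
      then show ?thesis unfolding e by simp
    next
      case False
      then obtain x where x: "x = a \<or> x = c" "\<not> onr N (x,b)" "x \<noteq> 0" "x \<noteq> 1" by blast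
      have xm: "(x,b) \<in> Mex" using x ab cb by blast
      obtain n where n: "n \<ge> 1" "b = 1/2^n" using xm x(3,4) unfolding Mex_iff by blast
      have x01: "0 < x" "x < 1" using Mex_bounds[OF xm] x(3,4) by auto
      have nN: "n \<le> N" using x(2) x01 unfolding n(2) onr_pt by simp
      have na: "\<not> onr N (a,b)" "\<not> onr N (c,b)" using nN unfolding n(2) onr_pt by auto
      have ua: "UU N g (a,b) = g (a,b) - \<gamma> * h0 (a,b)" using UU_not[OF ab na(1)] unfolding \<gamma>_def .
      have uc: "UU N g (c,b) = g (c,b) - \<gamma> * h0 (c,b)" using UU_not[OF cb na(2)] unfolding \<gamma>_def .
      have e: "FF N g \<sigma> (a,b) - FF N g \<sigma> (c,b) = ((a - c) * (1 - b)) * (1 - \<sigma> * \<gamma>) + \<sigma> * (g (a,b) - g (c,b))"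
        unfolding FF_def ua uc h0_pt[OF ab] h0_pt[OF cb] by (simp add: algebra_simps)
      have "(2::real)^n \<le> 2^N" using nN by (intro power_increasing) auto
      then have b2s: "2 * s \<le> b" unfolding n(2) s_def by (simp add: field_simps)
      have g1: "\<bar>g (a,b) - g (c,b)\<bar> \<le> D" using glip[OF g ab cb] unfolding D_def by (simp add: dex_same)
      have t1: "\<bar>\<sigma> * \<gamma>\<bar> \<le> s * 1" by (rule absmul_le[OF sig' gam])
      have t2: "\<bar>1 - \<sigma> * \<gamma>\<bar> \<le> 1 + s" using t1 by (simp add: abs_le_iff; linarith?)
      have "\<bar>((a - c) * (1 - b)) * (1 - \<sigma> * \<gamma>)\<bar> \<le> (D * (1 - b)) * (1 + s)"
        unfolding abs_mult D_def using t2 ba(4) by (intro mult_mono) auto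
      moreover have "\<bar>\<sigma> * (g (a,b) - g (c,b))\<bar> \<le> s * D" by (rule absmul_le[OF sig' g1])
      ultimately have "\<bar>FF N g \<sigma> (a,b) - FF N g \<sigma> (c,b)\<bar> \<le> (D * (1 - b)) * (1 + s) + s * D"
        unfolding e by (metis abs_triangle_ineq add_mono order_trans)
      also have "\<dots> = D * (1 - b + 2 * s - b * s)" by (simp add: algebra_simps)
      also have "\<dots> \<le> D * 1"
      proof (rule mult_left_mono[OF _ D0])
        have "b * s \<ge> 0" using ba(3) s_pos by simp
        then show "1 - b + 2 * s - b * s \<le> 1" using b2s by linarith
      qed
      finally show ?thesis unfolding D_def by simp
    qed
  next
    fix b e :: real assume h: "0 \<le> b" "b \<le> 1/2" "0 \<le> e" "e \<le> 1/2"
    have m: "(0,b) \<in> Mex" "(0,e) \<in> Mex" "(1,b) \<in> Mex" "(1,e) \<in> Mex" using h by (auto intro: side_in)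
    have no: "\<not> onr N (s0, t)" if "s0 = 0 \<or> s0 = 1" for s0 t using that by (auto simp: onr_def)
    have u: "UU N g (s0, t) = g (s0, t) - \<gamma> * h0 (s0, t)" if "(s0,t) \<in> Mex" "s0 = 0 \<or> s0 = 1" for s0 t
      using UU_not[OF that(1) no[OF that(2)]] unfolding \<gamma>_def .
    have u0: "UU N g (0,t) = g (0,t) - \<gamma> * h0 (0,t)" if "(0,t) \<in> Mex" for t using u[OF that] by simp
    have u1: "UU N g (1,t) = g (1,t) - \<gamma> * h0 (1,t)" if "(1,t) \<in> Mex" for t using u[OF that] by simp
    have g0: "\<bar>g (0,b) - g (0,e)\<bar> \<le> \<bar>b - e\<bar>" using glip[OF g m(1,2)] by (simp add: dex_side)
    have g1: "\<bar>g (1,b) - g (1,e)\<bar> \<le> \<bar>b - e\<bar>" using glip[OF g m(3,4)] by (simp add: dex_side)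
    have gb: "\<bar>\<gamma> * ((b - e) / 2)\<bar> \<le> 1 * (\<bar>b - e\<bar> / 2)" by (rule absmul_le[OF gam]) simp
    have e0: "FF N g \<sigma> (0,b) - FF N g \<sigma> (0,e) = (b - e) / 2 + \<sigma> * ((g (0,b) - g (0,e)) - \<gamma> * ((b - e) / 2))"
      unfolding FF_def u0[OF m(1)] u0[OF m(2)] h0_pt[OF m(1)] h0_pt[OF m(2)] by (simp add: field_simps)
    have e1: "FF N g \<sigma> (1,b) - FF N g \<sigma> (1,e) = - ((b - e) / 2) + \<sigma> * ((g (1,b) - g (1,e)) + \<gamma> * ((b - e) / 2))"
      unfolding FF_def u1[OF m(3)] u1[OF m(4)] h0_pt[OF m(3)] h0_pt[OF m(4)] by (simp add: field_simps)
    have i0: "\<bar>(g (0,b) - g (0,e)) - \<gamma> * ((b - e) / 2)\<bar> \<le> 3/2 * \<bar>b - e\<bar>"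
      using order_trans[OF abs_triangle_ineq4[of "g (0,b) - g (0,e)" "\<gamma> * ((b - e) / 2)"] add_mono[OF g0 gb]] by simp
    have i1: "\<bar>(g (1,b) - g (1,e)) + \<gamma> * ((b - e) / 2)\<bar> \<le> 3/2 * \<bar>b - e\<bar>"
      using order_trans[OF abs_triangle_ineq[of "g (1,b) - g (1,e)" "\<gamma> * ((b - e) / 2)"] add_mono[OF g1 gb]] by simp
    have s32: "s * (3/2 * \<bar>b - e\<bar>) \<le> \<bar>b - e\<bar> / 2"
    proof -
      have "s * (3/2) \<le> 1/2" using s4 by linarith
      then have "(s * (3/2)) * \<bar>b - e\<bar> \<le> (1/2) * \<bar>b - e\<bar>" by (rule mult_right_mono) simp
      then show ?thesis by (simp add: mult.assoc)
    qed
    have j0: "\<bar>\<sigma> * ((g (0,b) - g (0,e)) - \<gamma> * ((b - e) / 2))\<bar> \<le> \<bar>b - e\<bar> / 2"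
      using absmul_le[OF sig' i0] s32 by linarith
    have j1: "\<bar>\<sigma> * ((g (1,b) - g (1,e)) + \<gamma> * ((b - e) / 2))\<bar> \<le> \<bar>b - e\<bar> / 2"
      using absmul_le[OF sig' i1] s32 by linarith
    show "\<bar>FF N g \<sigma> (0,b) - FF N g \<sigma> (0,e)\<bar> \<le> 1 * \<bar>b - e\<bar>" unfolding e0
      using tri_le[of "(b - e) / 2" "\<bar>b - e\<bar> / 2", OF _ j0] by simp
    show "\<bar>FF N g \<sigma> (1,b) - FF N g \<sigma> (1,e)\<bar> \<le> 1 * \<bar>b - e\<bar>" unfolding e1
      using tri_le[of "- ((b - e) / 2)" "\<bar>b - e\<bar> / 2", OF _ j1] by simp
  qed simp
qed

lemma FF_LN:
  assumes g: "g \<in> LZ" "LN g \<le> 1" and N: "N \<ge> 1" and sig: "\<bar>\<sigma>\<bar> \<le> 1/2^(N+1)"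
  shows "LN (FF N g \<sigma>) \<le> 1"
  by (rule lipnorm_le) (use FF_lip[OF g N sig] in blast)


lemma key1:
  assumes mu: "\<mu> \<in> FS" and N: "N \<ge> 1" and eta: "\<eta> \<le> (1/2^(N+1)) / 16"
    and p: "DN (\<lambda>f. dq f + \<mu> f) \<le> 1 + \<eta>" and m: "DN (\<lambda>f. dq f - \<mu> f) \<le> 1 + \<eta>"
    and n: "1 - \<eta> < DN \<mu>"
  shows "\<exists>G. Zs N G \<and> \<mu> G \<ge> 1/4"
proof -
  define s :: real where "s = 1/2^(N+1)"
  have s_pos: "0 < s" unfolding s_def by simp
  have "(2::real)^2 \<le> 2^(N+1)" using N by (intro power_increasing) auto
  then have s4: "s \<le> 1/4" unfolding s_def by (simp add: field_simps)
  have eta': "\<eta> \<le> s / 16" using eta unfolding s_def .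
  obtain g where g: "g \<in> LZ" "LN g \<le> 1" "1 - \<eta> < \<mu> g" using get_g[OF mu n] by blast
  define \<gamma> where "\<gamma> = g (1,0)"
  have gam: "\<bar>\<gamma>\<bar> \<le> 1" unfolding \<gamma>_def using lz_q[OF g(1)] g(2) by simp
  have eqF: "FF N g \<sigma> = (\<lambda>p. 1 * h0 p + \<sigma> * UU N g p)" for \<sigma> by (rule ext) (simp add: FF_def)
  have muF: "\<mu> (FF N g \<sigma>) = \<mu> h0 + \<sigma> * \<mu> (UU N g)" for \<sigma>
    unfolding eqF using fs_lin[OF mu h0_lz UU_lz[OF g(1,2)], of 1 \<sigma>] by simp
  have Fp: "\<bar>\<mu> (FF N g s)\<bar> \<le> \<eta>"
    by (rule norming_small[OF mu p m FF_lz[OF g(1,2)] FF_LN[OF g(1,2) N] FF_q]) (simp add: s_def)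
  have Fm: "\<bar>\<mu> (FF N g (-s))\<bar> \<le> \<eta>"
    by (rule norming_small[OF mu p m FF_lz[OF g(1,2)] FF_LN[OF g(1,2) N] FF_q]) (simp add: s_def)
  have h: "\<bar>\<mu> h0\<bar> \<le> \<eta>" by (rule norming_small[OF mu p m h0_lz h0_LN h0_q])
  have "2 * s * \<mu> (UU N g) = \<mu> (FF N g s) - \<mu> (FF N g (-s))" unfolding muF by simp
  then have "\<bar>2 * s * \<mu> (UU N g)\<bar> \<le> 2 * \<eta>" using Fp Fm by linarith
  then have "s * \<bar>\<mu> (UU N g)\<bar> \<le> \<eta>" using s_pos by (simp add: abs_mult)
  then have "\<bar>\<mu> (UU N g)\<bar> \<le> \<eta> / s" using s_pos by (simp add: pos_le_divide_eq mult.commute)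
  also have "\<dots> \<le> 1/16" using eta' s_pos by (simp add: divide_le_eq)
  finally have U: "\<bar>\<mu> (UU N g)\<bar> \<le> 1/16" .
  have eqU: "UU N g = (\<lambda>p. 1 * g p + (-1) * WW N g p)" by (rule ext) (simp add: UU_def)
  have eqW: "WW N g = (\<lambda>p. 2 * GG N g p + \<gamma> * h0 p)" by (rule ext) (simp add: WW_def \<gamma>_def)
  have Z: "Zs N (GG N g)" by (rule GG_Zs[OF g(1,2)])
  have GL: "GG N g \<in> LZ" using Z unfolding Zs_def by blast
  have muU: "\<mu> (UU N g) = \<mu> g - \<mu> (WW N g)"
    unfolding eqU using fs_lin[OF mu g(1) WW_lz[OF g(1,2)], of 1 "-1"] by simp
  have muW: "\<mu> (WW N g) = 2 * \<mu> (GG N g) + \<gamma> * \<mu> h0"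
    unfolding eqW using fs_lin[OF mu GL h0_lz, of 2 \<gamma>] by simp
  have gh: "\<bar>\<gamma> * \<mu> h0\<bar> \<le> 1 * \<eta>" by (rule absmul_le[OF gam h])
  have "\<eta> \<le> 1/64" using eta' s4 by linarith
  then have "2 * \<mu> (GG N g) \<ge> 1/2" using muU muW abs_le_D2[OF U] abs_le_D1[OF U] abs_le_D2[OF gh] abs_le_D1[OF gh] g(3) by linarith
  then show ?thesis using Z by (intro exI[of _ "GG N g"]) auto
qed

lemma key:
  assumes yfs: "\<And>i. y i \<in> FS"
    and cp: "(\<lambda>i. DN (\<lambda>f. dq f + y i f)) \<longlonglongrightarrow> 1"
    and cm: "(\<lambda>i. DN (\<lambda>f. dq f - y i f)) \<longlonglongrightarrow> 1"
    and cn: "(\<lambda>i. DN (y i)) \<longlonglongrightarrow> 1"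
    and N: "N \<ge> 1"
  shows "\<exists>I. \<forall>i\<ge>I. \<exists>G. Zs N G \<and> y i G \<ge> 1/4"
proof -
  define \<eta> :: real where "\<eta> = (1/2^(N+1)) / 16"
  have eta: "\<eta> > 0" unfolding \<eta>_def by simp
  have "eventually (\<lambda>i. DN (\<lambda>f. dq f + y i f) < 1 + \<eta>) sequentially"
    using order_tendstoD(2)[OF cp] eta by simp
  moreover have "eventually (\<lambda>i. DN (\<lambda>f. dq f - y i f) < 1 + \<eta>) sequentially"
    using order_tendstoD(2)[OF cm] eta by simp
  moreover have "eventually (\<lambda>i. 1 - \<eta> < DN (y i)) sequentially"
    using order_tendstoD(1)[OF cn] eta by simp
  ultimately have "eventually (\<lambda>i. \<exists>G. Zs N G \<and> y i G \<ge> 1/4) sequentially"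
  proof eventually_elim
    case (elim i)
    show ?case by (rule key1[OF yfs N _ _ _ elim(3)]) (use elim in \<open>auto simp: \<eta>_def\<close>)
  qed
  then show ?thesis unfolding eventually_sequentially by blast
qed


lemma Zs_lz: "Zs N G \<Longrightarrow> G \<in> LZ" and Zs_LN: "Zs N G \<Longrightarrow> LN G \<le> 1"
  unfolding Zs_def by auto
lemma Zs_van: "Zs N G \<Longrightarrow> \<not> onr N p \<Longrightarrow> G p = 0"
  unfolding Zs_def by (cases p) auto

lemma Zs_rung_zero:
  assumes "Zs 0 H" "\<forall>p. onr N p \<longrightarrow> H p = 0" "N < n" "0 \<le> x" "x \<le> 1"
  shows "H (x, 1/2^n) = 0"
proof (cases "0 < x \<and> x < 1")
  case True then show ?thesis using assms(2,3) by (simp add: onr_pt)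
next
  case False then show ?thesis using Zs_van[OF assms(1), of "(x, 1/2^n)"] by (simp add: onr_pt)
qed

lemma step:
  assumes yfs: "\<And>i. y i \<in> FS"
    and KEY: "\<And>N. N \<ge> 1 \<Longrightarrow> \<exists>I. \<forall>i\<ge>I. \<exists>G. Zs N G \<and> y i G \<ge> 1/4"
    and WN: "\<And>G. G \<in> LZ \<Longrightarrow> LN G \<le> 1 \<Longrightarrow> (\<lambda>i. y i G) \<longlonglongrightarrow> 0"
    and N: "N \<ge> 1" and H: "Zs 0 H" and Hv: "\<forall>p. onr N p \<longrightarrow> H p = 0"
  shows "\<exists>N' H' i. N < N' \<and> Zs 0 H' \<and> (\<forall>p. onr N' p \<longrightarrow> H' p = 0) \<and> (\<forall>p. \<not> onr N p \<longrightarrow> H' p = H p)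
     \<and> i \<ge> k \<and> \<bar>y i H\<bar> \<le> 1/32 \<and> y i H' \<ge> y i H + 7/32 \<and> (\<forall>G. Zs N' G \<longrightarrow> \<bar>y i G\<bar> \<le> 1/32)"
proof -
  have "eventually (\<lambda>i. \<bar>y i H\<bar> < 1/32) sequentially"
    using WN[OF Zs_lz[OF H] Zs_LN[OF H]] by (rule order_tendstoD(2)[OF tendsto_rabs_zero]) simp
  then obtain I1 where I1: "\<forall>i\<ge>I1. \<bar>y i H\<bar> < 1/32" unfolding eventually_sequentially by blast
  obtain I2 where I2: "\<forall>i\<ge>I2. \<exists>G. Zs N G \<and> y i G \<ge> 1/4" using KEY[OF N] by blast
  define i where "i = max k (max I1 I2)"
  obtain G where G: "Zs N G" "y i G \<ge> 1/4" proof -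
    have "i \<ge> I2" unfolding i_def by simp
    then show ?thesis using I2 that by blast
  qed
  have yH: "\<bar>y i H\<bar> \<le> 1/32"
  proof -
    have "i \<ge> I1" unfolding i_def by simp
    then show ?thesis using I1 by fastforce
  qed
  obtain N0 where N0: "\<forall>M\<ge>N0. \<forall>G. Zs M G \<longrightarrow> \<bar>y i G\<bar> \<le> 1/32" using tail[OF yfs, of "1/32" i] by auto
  define N' where "N' = max N0 (N + 1)"
  have NN': "N < N'" "N \<le> N'" unfolding N'_def by auto
  define G' where "G' = (\<lambda>p. if onr N' p then 0 else G p)"
  define T where "T = (\<lambda>p. if onr N' p then G p else 0)"
  have G': "Zs N G'" unfolding G'_def by (rule Zs_trunc1[OF G(1)])
  have T: "Zs N' T" unfolding T_def by (rule Zs_trunc2[OF G(1) NN'(2)])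
  have "N' \<ge> N0" unfolding N'_def by simp
  then have yT: "\<bar>y i T\<bar> \<le> 1/32" using N0 T by blast
  have eG: "G = (\<lambda>p. 1 * G' p + 1 * T p)" by (rule ext) (simp add: G'_def T_def)
  have "y i G = y i G' + y i T" using fs_lin[OF yfs Zs_lz[OF G'] Zs_lz[OF T], of i 1 1] eG by simp
  then have yG': "y i G' \<ge> 7/32" using G(2) yT by (simp add: abs_le_iff)
  define H' where "H' = (\<lambda>p. 1 * H p + 1 * G' p)"
  have yH': "y i H' = y i H + y i G'" unfolding H'_def using fs_lin[OF yfs Zs_lz[OF H] Zs_lz[OF G'], of i 1 1] by simp
  have H'Z: "Zs 0 H'"
  proof (rule Zlip)
    fix p assume np: "\<not> onr 0 p"
    have "\<not> onr N p" using np onr_mono[of 0 N p] by auto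
    then show "H' p = 0" unfolding H'_def using Zs_van[OF H np] Zs_van[OF G'] by simp
  next
    fix n :: nat and a c :: real assume h: "n \<ge> 1" "0 \<le> a" "a \<le> 1" "0 \<le> c" "c \<le> 1"
    show "\<bar>H' (a, 1/2^n) - H' (c, 1/2^n)\<bar> \<le> \<bar>a - c\<bar>"
    proof (cases "N < n")
      case True
      then have "H (a, 1/2^n) = 0" "H (c, 1/2^n) = 0" using Zs_rung_zero[OF H Hv] h by auto
      then show ?thesis unfolding H'_def using Zs_rung[OF G' h] by simp
    next
      case False
      then have "G' (a, 1/2^n) = 0" "G' (c, 1/2^n) = 0" using Zs_van[OF G'] by (auto simp: onr_pt)
      then show ?thesis unfolding H'_def using Zs_rung[OF H h] by simp
    qed
  qed
  have H'v: "\<forall>p. onr N' p \<longrightarrow> H' p = 0"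
    using Hv onr_mono[OF NN'(2)] unfolding H'_def G'_def by auto
  have H'e: "\<forall>p. \<not> onr N p \<longrightarrow> H' p = H p" unfolding H'_def using Zs_van[OF G'] by simp
  show ?thesis
    apply (rule exI[of _ N'], rule exI[of _ H'], rule exI[of _ i])
    using NN' H'Z H'v H'e yH yH' yG' N0 \<open>N' \<ge> N0\<close> unfolding i_def by auto
qed


lemma hump:
  assumes yfs: "\<And>i. y i \<in> FS"
    and KEY: "\<And>N. N \<ge> 1 \<Longrightarrow> \<exists>I. \<forall>i\<ge>I. \<exists>G. Zs N G \<and> y i G \<ge> 1/4"
    and WN: "\<And>G. G \<in> LZ \<Longrightarrow> LN G \<le> 1 \<Longrightarrow> (\<lambda>i. y i G) \<longlonglongrightarrow> 0"
  shows False
proof -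
  define Q where "Q = (\<lambda>k (N::nat) (H::real\<times>real\<Rightarrow>real) N' H' (i::nat). N < N' \<and> Zs 0 H' \<and> (\<forall>p. onr N' p \<longrightarrow> H' p = 0)
     \<and> (\<forall>p. \<not> onr N p \<longrightarrow> H' p = H p) \<and> i \<ge> k \<and> \<bar>y i H\<bar> \<le> 1/32 \<and> y i H' \<ge> y i H + 7/32
     \<and> (\<forall>G. Zs N' G \<longrightarrow> \<bar>y i G\<bar> \<le> 1/32))"
  have QD: "N < N'" "Zs 0 H'" "\<forall>p. onr N' p \<longrightarrow> H' p = 0" "\<forall>p. \<not> onr N p \<longrightarrow> H' p = H p" "i \<ge> k"
    "\<bar>y i H\<bar> \<le> 1/32" "y i H' \<ge> y i H + 7/32" "\<forall>G. Zs N' G \<longrightarrow> \<bar>y i G\<bar> \<le> 1/32"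
    if "Q k N H N' H' i" for k N H N' H' i using that unfolding Q_def by blast+
  have stepQ: "\<exists>s'. \<exists>i. Q k N H (fst s') (snd s') i" if a: "N \<ge> 1" "Zs 0 H" "\<forall>p. onr N p \<longrightarrow> H p = 0" for k N H
  proof -
    obtain N' H' i where "Q k N H N' H' i" using step[OF yfs KEY WN a, of k] unfolding Q_def by blast
    then show ?thesis by (intro exI[of _ "(N', H')"]) auto
  qed
  define st where "st = rec_nat (1::nat, \<lambda>p::real\<times>real. 0::real) (\<lambda>k s. SOME s'. \<exists>i. Q k (fst s) (snd s) (fst s') (snd s') i)"
  define Nn where "Nn k = fst (st k)" for k
  define Hh where "Hh k = snd (st k)" for k
  have st0: "Nn 0 = 1" "Hh 0 = (\<lambda>p. 0)" by (simp_all add: st_def Nn_def Hh_def)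
  have stS: "st (Suc k) = (SOME s'. \<exists>i. Q k (Nn k) (Hh k) (fst s') (snd s') i)" for k
    by (simp add: st_def Nn_def Hh_def)
  have Z0: "Zs 0 (\<lambda>p. 0)" by (rule Zlip) auto
  have inv: "Nn k \<ge> 1 \<and> Zs 0 (Hh k) \<and> (\<forall>p. onr (Nn k) p \<longrightarrow> Hh k p = 0)" for k
  proof (induction k)
    case 0 then show ?case using st0 Z0 by simp
  next
    case (Suc k)
    have "\<exists>i. Q k (Nn k) (Hh k) (Nn (Suc k)) (Hh (Suc k)) i"
      unfolding Nn_def[of "Suc k"] Hh_def[of "Suc k"] stS
      by (rule someI_ex) (rule stepQ, use Suc in auto)
    then obtain i where "Q k (Nn k) (Hh k) (Nn (Suc k)) (Hh (Suc k)) i" by blast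
    then have "Nn k < Nn (Suc k)" "Zs 0 (Hh (Suc k))" "\<forall>p. onr (Nn (Suc k)) p \<longrightarrow> Hh (Suc k) p = 0"
      using QD(1,2,3) by blast+
    then show ?case using Suc by simp
  qed
  have qk: "\<exists>i. Q k (Nn k) (Hh k) (Nn (Suc k)) (Hh (Suc k)) i" for k
    unfolding Nn_def[of "Suc k"] Hh_def[of "Suc k"] stS
    by (rule someI_ex) (rule stepQ, use inv[of k] in auto)
  have Nmono: "Nn k < Nn (Suc k)" for k using qk[of k] QD(1) by blast
  have Nge: "Nn k \<ge> k" for k
  proof (induction k)
    case (Suc k) then show ?case using Nmono[of k] by simp
  qed simp
  have Nle: "k \<le> k' \<Longrightarrow> Nn k \<le> Nn k'" for k k'
    using lift_Suc_mono_le[of Nn, OF less_imp_le[OF Nmono]] by blast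
  have Hkeep: "Hh (Suc k) p = Hh k p" if "\<not> onr (Nn k) p" for k p using qk[of k] that QD(4) by blast
  have agree: "k \<le> k' \<Longrightarrow> \<not> onr (Nn k) p \<Longrightarrow> Hh k' p = Hh k p" for k k' p
  proof (induction k' rule: dec_induct)
    case (step m)
    have "\<not> onr (Nn m) p" using step(4) onr_mono[OF Nle[OF step(1)]] by blast
    then show ?case using Hkeep step by simp
  qed simp
  have agree2: "Hh k1 p = Hh k2 p" if "\<not> onr (Nn k1) p" "\<not> onr (Nn k2) p" for k1 k2 p
    using agree[of k1 "max k1 k2" p] agree[of k2 "max k1 k2" p] that by simp
  have exk: "\<exists>k. \<not> onr (Nn k) p" for p
  proof -
    obtain M0 where "\<forall>M\<ge>M0. \<not> onr M p" using eventually_not_onr[of p] unfolding eventually_sequentially by blast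
    then show ?thesis using Nge[of M0] by blast
  qed
  define F where "F p = Hh (LEAST k. \<not> onr (Nn k) p) p" for p
  have FH: "F p = Hh k p" if "\<not> onr (Nn k) p" for k p
    unfolding F_def using agree2[OF LeastI_ex[OF exk] that] .
  have rungk: "\<not> onr (Nn n) (x, 1/2^n)" for n x using Nge[of n] by (simp add: onr_pt)
  have FZ: "Zs 0 F"
  proof (rule Zlip)
    fix p assume "\<not> onr 0 p"
    then have "\<not> onr (Nn 0) p" using onr_mono[of 0 "Nn 0" p] by auto
    then show "F p = 0" using FH[of 0 p] st0 by simp
  next
    fix n :: nat and a c :: real assume h: "n \<ge> 1" "0 \<le> a" "a \<le> 1" "0 \<le> c" "c \<le> 1"
    show "\<bar>F (a, 1/2^n) - F (c, 1/2^n)\<bar> \<le> \<bar>a - c\<bar>"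
      using FH[OF rungk[of n a]] FH[OF rungk[of n c]] Zs_rung[OF conjunct1[OF conjunct2[OF inv[of n]]] h] by simp
  qed
  define ik where "ik k = (SOME i. Q k (Nn k) (Hh k) (Nn (Suc k)) (Hh (Suc k)) i)" for k
  have Qik: "Q k (Nn k) (Hh k) (Nn (Suc k)) (Hh (Suc k)) (ik k)" for k
    unfolding ik_def by (rule someI_ex[OF qk])
  have low: "y (ik k) F \<ge> 5/32" for k
  proof -
    define T where "T = (\<lambda>p. 1 * F p + (-1) * Hh (Suc k) p)"
    have HZ: "Zs 0 (Hh (Suc k))" and Hv: "\<forall>p. onr (Nn (Suc k)) p \<longrightarrow> Hh (Suc k) p = 0" using inv[of "Suc k"] by auto
    have TZ: "Zs (Nn (Suc k)) T"
    proof (rule Zlip)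
      fix p assume "\<not> onr (Nn (Suc k)) p"
      then show "T p = 0" unfolding T_def using FH[of "Suc k" p] by simp
    next
      fix n :: nat and a c :: real assume h: "n \<ge> 1" "0 \<le> a" "a \<le> 1" "0 \<le> c" "c \<le> 1"
      show "\<bar>T (a, 1/2^n) - T (c, 1/2^n)\<bar> \<le> \<bar>a - c\<bar>"
      proof (cases "Nn (Suc k) < n")
        case True
        then have "Hh (Suc k) (a, 1/2^n) = 0" "Hh (Suc k) (c, 1/2^n) = 0" using Zs_rung_zero[OF HZ Hv] h by auto
        then show ?thesis unfolding T_def using Zs_rung[OF FZ h] by simp
      next
        case False
        then have nn: "\<not> onr (Nn (Suc k)) (x, 1/2^n)" for x by (simp add: onr_pt)
        show ?thesis unfolding T_def using FH[OF nn[of a]] FH[OF nn[of c]] by simp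
      qed
    qed
    have eF: "F = (\<lambda>p. 1 * Hh (Suc k) p + 1 * T p)" by (rule ext) (simp add: T_def)
    have "y (ik k) F = y (ik k) (Hh (Suc k)) + y (ik k) T"
      using fs_lin[OF yfs Zs_lz[OF HZ] Zs_lz[OF TZ], of "ik k" 1 1] eF by simp
    moreover have "\<bar>y (ik k) T\<bar> \<le> 1/32" using QD(8)[OF Qik[of k]] TZ by blast
    moreover have "y (ik k) (Hh (Suc k)) \<ge> y (ik k) (Hh k) + 7/32" "\<bar>y (ik k) (Hh k)\<bar> \<le> 1/32"
      using QD(6,7)[OF Qik[of k]] by auto
    ultimately show ?thesis by (simp add: abs_le_iff)
  qed
  have ikge: "ik k \<ge> k" for k using QD(5)[OF Qik[of k]] .
  have lim_ik: "filterlim ik sequentially sequentially"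
    by (rule filterlim_at_top_mono[OF filterlim_ident]) (use ikge in auto)
  have "(\<lambda>k. y (ik k) F) \<longlonglongrightarrow> 0"
    using filterlim_compose[OF WN[OF Zs_lz[OF FZ] Zs_LN[OF FZ]] lim_ik] by simp
  then have "5/32 \<le> (0::real)" by (rule LIMSEQ_le_const) (use low in auto)
  then show False by simp
qed

theorem mainTheorem1:
  shows "\<not> free_WASQ Mex dex (0, 0)"
proof
  assume W: "free_WASQ Mex dex (0, 0)"
  obtain y where y: "\<forall>i. y i \<in> FS \<and> DN (y i) \<le> 1"
    "(\<lambda>i. DN (\<lambda>f. dq f + y i f)) \<longlonglongrightarrow> 1"
    "(\<lambda>i. DN (\<lambda>f. dq f - y i f)) \<longlonglongrightarrow> 1"
    "(\<lambda>i. DN (y i)) \<longlonglongrightarrow> 1"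
    "weakly_null Mex dex (0,0) y"
    using W dq_fs dq_norm unfolding free_WASQ_def by blast
  have yfs: "\<And>i. y i \<in> FS" using y(1) by blast
  show False
  proof (rule hump[OF yfs])
    fix N :: nat assume "N \<ge> 1"
    then show "\<exists>I. \<forall>i\<ge>I. \<exists>G. Zs N G \<and> y i G \<ge> 1/4" by (rule key[OF yfs y(2,3,4)])
  next
    fix G assume "G \<in> LZ" "LN G \<le> 1"
    then show "(\<lambda>i. y i G) \<longlonglongrightarrow> 0" by (rule wn[OF y(5)])
  qed
qed

end
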